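(* Let $u=v$ be a context equation and let $u'=v'$ be obtained from it by one of the following operations: (1) replacing all occurrences of a context variable $X$ by $tX$ (respectively all occurrences of a variable $x$ by $tx$), where $t$ is a context term; (2) replacing all occurrences of a context variable $X$ by $Xt$, where $t$ is a context term; (3) replacing all occurrences of a variable $x$ by a ground term $t$; (4) performing an $(f,i,a)$ leaf compression on $u=v$; (5) performing an $a,b$ pair compression on $u=v$; (6) performing an $a$-maximal chain compression on $u=v$. If $u'=v'$ has a solution then $u=v$ has a solution.
   Context: $\Sigma$ is a ranked signature; $\Omega$ is a special constant not in $\Sigma$; context variables have arity $1$, variables arity $0$. Ground terms: finite ordered trees over $\Sigma$ with each node labelled $f$ having $\mathrm{ar}(f)$ children; ground contexts: ground terms over $\Sigma\cup\{\Omega\}$ with exactly one $\Omega$; terms: such trees over $\Sigma$, variables and context variables; context terms: trees over $\Sigma$, variables, context variables and $\Omega$ with exactly one $\Omega$. For a term or context term $s$ with one $\Omega$, "replacing $X$ by $tX$" means replacing each subterm $X(s)$ by $t$ with $\Omega$ replaced by $X(s)$, and "replacing $X$ by $Xt$" means replacing each $X(s)$ by $X(t')$ where $t'$ is $t$ with $\Omega$ replaced by $s$. A context equation is $u=v$ with $u,v$ terms. A substitution $\sigma$ assigns ground contexts to context variables and ground terms to variables, extended by $\sigma(a)=a$, $\sigma(f(t_1,\dots,t_m))=f(\sigma(t_1),\dots,\sigma(t_m))$, $\sigma(Xt)=\sigma(X)\sigma(t)$; a solution satisfies $\sigma(u)=\sigma(v)$. The compressions are performed on the equation viewed as a tree whose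 root is labelled $=$ with children $u$ and $v$ (variables and context variables are never compressed), with fresh letters not occurring in the equation: $(f,i,a)$ leaf compression ($\mathrm{ar}(f)=m\ge i\ge1$, $a$ a constant) replaces each subtree $f(t_1,\dots,t_{i-1},a,t_{i+1},\dots,t_m)$ by $f'(t_1,\dots,t_{i-1},t_{i+1},\dots,t_m)$ with $f'$ a fresh letter of arity $m-1$; $a,b$ pair compression ($a,b$ unary) replaces each node labelled $a$ whose child is labelled $b$, together with that child, by one node labelled by a fresh unary letter $c$; $a$-maximal chain compression ($a$ unary) replaces each maximal (upward and downward) chain of $\ell$ consecutive nodes labelled $a$ by one node labelled with a fresh unary letter $a_\ell$ (distinct for distinct $\ell$). *)

theory Defs
  imports Main
begin

text \<open>Trees over letters 'f (the ranked signature is a set of letters together with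
an arity function), variables 'v (arity 0), context variables 'c (arity 1, hence
exactly one child) and the special constant Omega (Hole).\<close>

datatype ('f, 'v, 'c) tm =
    Fun 'f "('f, 'v, 'c) tm list"
  | Var 'v
  | CVar 'c "('f, 'v, 'c) tm"
  | Hole

fun funs :: "('f, 'v, 'c) tm \<Rightarrow> 'f set" where
  "funs (Fun f ts) = insert f (\<Union> (set (map funs ts)))"
| "funs (Var x) = {}"
| "funs (CVar X t) = funs t"
| "funs Hole = {}"

fun holes :: "('f, 'v, 'c) tm \<Rightarrow> nat" where
  "holes (Fun f ts) = sum_list (map holes ts)"
| "holes (Var x) = 0"
| "holes (CVar X t) = holes t"
| "holes Hole = 1"

fun wf :: "('f \<Rightarrow> nat) \<Rightarrow> ('f, 'v, 'c) tm \<Rightarrow> bool" where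
  "wf ar (Fun f ts) = (length ts = ar f \<and> (\<forall>t\<in>set ts. wf ar t))"
| "wf ar (Var x) = True"
| "wf ar (CVar X t) = wf ar t"
| "wf ar Hole = True"

fun no_vars :: "('f, 'v, 'c) tm \<Rightarrow> bool" where
  "no_vars (Fun f ts) = (\<forall>t\<in>set ts. no_vars t)"
| "no_vars (Var x) = False"
| "no_vars (CVar X t) = False"
| "no_vars Hole = True"

definition is_term :: "'f set \<Rightarrow> ('f \<Rightarrow> nat) \<Rightarrow> ('f, 'v, 'c) tm \<Rightarrow> bool" where
  "is_term \<Sigma> ar t \<longleftrightarrow> wf ar t \<and> funs t \<subseteq> \<Sigma> \<and> holes t = 0"

definition is_ctxt_term :: "'f set \<Rightarrow> ('f \<Rightarrow> nat) \<Rightarrow> ('f, 'v, 'c) tm \<Rightarrow> bool" where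
  "is_ctxt_term \<Sigma> ar t \<longleftrightarrow> wf ar t \<and> funs t \<subseteq> \<Sigma> \<and> holes t = 1"

definition ground_term :: "'f set \<Rightarrow> ('f \<Rightarrow> nat) \<Rightarrow> ('f, 'v, 'c) tm \<Rightarrow> bool" where
  "ground_term \<Sigma> ar t \<longleftrightarrow> is_term \<Sigma> ar t \<and> no_vars t"

definition ground_ctxt :: "'f set \<Rightarrow> ('f \<Rightarrow> nat) \<Rightarrow> ('f, 'v, 'c) tm \<Rightarrow> bool" where
  "ground_ctxt \<Sigma> ar t \<longleftrightarrow> is_ctxt_term \<Sigma> ar t \<and> no_vars t"

fun fill :: "('f, 'v, 'c) tm \<Rightarrow> ('f, 'v, 'c) tm \<Rightarrow> ('f, 'v, 'c) tm" where
  "fill (Fun f ts) s = Fun f (map (\<lambda>t. fill t s) ts)"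
| "fill (Var x) s = Var x"
| "fill (CVar X t) s = CVar X (fill t s)"
| "fill Hole s = s"

fun sapp :: "('v \<Rightarrow> ('f, 'v, 'c) tm) \<Rightarrow> ('c \<Rightarrow> ('f, 'v, 'c) tm)
    \<Rightarrow> ('f, 'v, 'c) tm \<Rightarrow> ('f, 'v, 'c) tm" where
  "sapp sx sX (Fun f ts) = Fun f (map (sapp sx sX) ts)"
| "sapp sx sX (Var x) = sx x"
| "sapp sx sX (CVar X t) = fill (sX X) (sapp sx sX t)"
| "sapp sx sX Hole = Hole"

definition is_solution :: "'f set \<Rightarrow> ('f \<Rightarrow> nat) \<Rightarrow> ('v \<Rightarrow> ('f, 'v, 'c) tm)
    \<Rightarrow> ('c \<Rightarrow> ('f, 'v, 'c) tm) \<Rightarrow> ('f, 'v, 'c) tm \<Rightarrow> ('f, 'v, 'c) tm \<Rightarrow> bool" where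
  "is_solution \<Sigma> ar sx sX u v \<longleftrightarrow>
     (\<forall>x. ground_term \<Sigma> ar (sx x)) \<and> (\<forall>X. ground_ctxt \<Sigma> ar (sX X)) \<and>
     sapp sx sX u = sapp sx sX v"

definition solvable :: "'f set \<Rightarrow> ('f \<Rightarrow> nat) \<Rightarrow> ('f, 'v, 'c) tm \<Rightarrow> ('f, 'v, 'c) tm \<Rightarrow> bool" where
  "solvable \<Sigma> ar u v \<longleftrightarrow> (\<exists>sx sX. is_solution \<Sigma> ar sx sX u v)"

text \<open>(1) X replaced by tX: each X(s) becomes t[X(s)] (simultaneously; occurrences
inside s are replaced as well, occurrences inside the inserted t are not).\<close>
fun pre_cvar :: "'c \<Rightarrow> ('f, 'v, 'c) tm \<Rightarrow> ('f, 'v, 'c) tm \<Rightarrow> ('f, 'v, 'c) tm" where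
  "pre_cvar X t (Fun f ts) = Fun f (map (pre_cvar X t) ts)"
| "pre_cvar X t (Var y) = Var y"
| "pre_cvar X t (CVar Y s) =
     (if Y = X then fill t (CVar X (pre_cvar X t s)) else CVar Y (pre_cvar X t s))"
| "pre_cvar X t Hole = Hole"

fun pre_var :: "'v \<Rightarrow> ('f, 'v, 'c) tm \<Rightarrow> ('f, 'v, 'c) tm \<Rightarrow> ('f, 'v, 'c) tm" where
  "pre_var x t (Fun f ts) = Fun f (map (pre_var x t) ts)"
| "pre_var x t (Var y) = (if y = x then fill t (Var x) else Var y)"
| "pre_var x t (CVar Y s) = CVar Y (pre_var x t s)"
| "pre_var x t Hole = Hole"

fun post_cvar :: "'c \<Rightarrow> ('f, 'v, 'c) tm \<Rightarrow> ('f, 'v, 'c) tm \<Rightarrow> ('f, 'v, 'c) tm" where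
  "post_cvar X t (Fun f ts) = Fun f (map (post_cvar X t) ts)"
| "post_cvar X t (Var y) = Var y"
| "post_cvar X t (CVar Y s) =
     (if Y = X then CVar X (fill t (post_cvar X t s)) else CVar Y (post_cvar X t s))"
| "post_cvar X t Hole = Hole"

fun inst_var :: "'v \<Rightarrow> ('f, 'v, 'c) tm \<Rightarrow> ('f, 'v, 'c) tm \<Rightarrow> ('f, 'v, 'c) tm" where
  "inst_var x t (Fun f ts) = Fun f (map (inst_var x t) ts)"
| "inst_var x t (Var y) = (if y = x then t else Var y)"
| "inst_var x t (CVar Y s) = CVar Y (inst_var x t s)"
| "inst_var x t Hole = Hole"

fun leaf_comp :: "'f \<Rightarrow> nat \<Rightarrow> 'f \<Rightarrow> 'f \<Rightarrow> ('f, 'v, 'c) tm \<Rightarrow> ('f, 'v, 'c) tm" where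
  "leaf_comp f i a f' (Fun g ts) =
     (let ts' = map (leaf_comp f i a f') ts in
      if g = f \<and> 1 \<le> i \<and> i \<le> length ts \<and> ts ! (i - 1) = Fun a []
      then Fun f' (take (i - 1) ts' @ drop i ts')
      else Fun g ts')"
| "leaf_comp f i a f' (Var y) = Var y"
| "leaf_comp f i a f' (CVar Y s) = CVar Y (leaf_comp f i a f' s)"
| "leaf_comp f i a f' Hole = Hole"

text \<open>(5) a,b pair compression with fresh letter c (occurrences processed top-down).\<close>
fun pair_comp :: "'f \<Rightarrow> 'f \<Rightarrow> 'f \<Rightarrow> ('f, 'v, 'c) tm \<Rightarrow> ('f, 'v, 'c) tm" where
  "pair_comp a b c (Fun g [Fun h [s]]) =
     (if g = a \<and> h = b then Fun c [pair_comp a b c s]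
      else Fun g [pair_comp a b c (Fun h [s])])"
| "pair_comp a b c (Fun g ts) = Fun g (map (pair_comp a b c) ts)"
| "pair_comp a b c (Var y) = Var y"
| "pair_comp a b c (CVar Y s) = CVar Y (pair_comp a b c s)"
| "pair_comp a b c Hole = Hole"

text \<open>(6) a-maximal chain compression; ac l is the fresh letter a_l.
The accumulator k counts the a-nodes of the current chain seen so far.\<close>
definition wrap_chain :: "(nat \<Rightarrow> 'f) \<Rightarrow> nat \<Rightarrow> ('f, 'v, 'c) tm \<Rightarrow> ('f, 'v, 'c) tm" where
  "wrap_chain ac k s = (if k = 0 then s else Fun (ac k) [s])"

fun chain_comp_aux :: "'f \<Rightarrow> (nat \<Rightarrow> 'f) \<Rightarrow> nat \<Rightarrow> ('f, 'v, 'c) tm \<Rightarrow> ('f, 'v, 'c) tm" where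
  "chain_comp_aux a ac k (Fun g [t]) =
     (if g = a then chain_comp_aux a ac (Suc k) t
      else wrap_chain ac k (Fun g [chain_comp_aux a ac 0 t]))"
| "chain_comp_aux a ac k (Fun g ts) = wrap_chain ac k (Fun g (map (chain_comp_aux a ac 0) ts))"
| "chain_comp_aux a ac k (Var y) = wrap_chain ac k (Var y)"
| "chain_comp_aux a ac k (CVar Y s) = wrap_chain ac k (CVar Y (chain_comp_aux a ac 0 s))"
| "chain_comp_aux a ac k Hole = wrap_chain ac k Hole"

definition chain_comp :: "'f \<Rightarrow> (nat \<Rightarrow> 'f) \<Rightarrow> ('f, 'v, 'c) tm \<Rightarrow> ('f, 'v, 'c) tm" where
  "chain_comp a ac t = chain_comp_aux a ac 0 t"

definition fresh_for :: "'f \<Rightarrow> ('f, 'v, 'c) tm \<Rightarrow> ('f, 'v, 'c) tm \<Rightarrow> bool" where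
  "fresh_for f u v \<longleftrightarrow> f \<notin> funs u \<and> f \<notin> funs v"

definition one_step :: "'f set \<Rightarrow> ('f \<Rightarrow> nat) \<Rightarrow> ('f, 'v, 'c) tm \<Rightarrow> ('f, 'v, 'c) tm
    \<Rightarrow> 'f set \<Rightarrow> ('f, 'v, 'c) tm \<Rightarrow> ('f, 'v, 'c) tm \<Rightarrow> bool" where
  "one_step \<Sigma> ar u v \<Sigma>' u' v' \<longleftrightarrow>
     \<comment> \<open>(1) X by tX\<close>
     (\<exists>X t. is_ctxt_term \<Sigma> ar t \<and> \<Sigma>' = \<Sigma> \<and>
        u' = pre_cvar X t u \<and> v' = pre_cvar X t v) \<or>
     \<comment> \<open>(1) x by tx\<close>
     (\<exists>x t. is_ctxt_term \<Sigma> ar t \<and> \<Sigma>' = \<Sigma> \<and>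
        u' = pre_var x t u \<and> v' = pre_var x t v) \<or>
     \<comment> \<open>(2) X by Xt\<close>
     (\<exists>X t. is_ctxt_term \<Sigma> ar t \<and> \<Sigma>' = \<Sigma> \<and>
        u' = post_cvar X t u \<and> v' = post_cvar X t v) \<or>
     \<comment> \<open>(3) x by a ground term t\<close>
     (\<exists>x t. ground_term \<Sigma> ar t \<and> \<Sigma>' = \<Sigma> \<and>
        u' = inst_var x t u \<and> v' = inst_var x t v) \<or>
     \<comment> \<open>(4) (f,i,a) leaf compression\<close>
     (\<exists>f i a f'. f \<in> \<Sigma> \<and> a \<in> \<Sigma> \<and> ar a = 0 \<and> 1 \<le> i \<and> i \<le> ar f \<and>
        fresh_for f' u v \<and> ar f' = ar f - 1 \<and> \<Sigma>' = insert f' \<Sigma> \<and>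
        u' = leaf_comp f i a f' u \<and> v' = leaf_comp f i a f' v) \<or>
     \<comment> \<open>(5) a,b pair compression\<close>
     (\<exists>a b c. a \<in> \<Sigma> \<and> b \<in> \<Sigma> \<and> ar a = 1 \<and> ar b = 1 \<and>
        fresh_for c u v \<and> ar c = 1 \<and> \<Sigma>' = insert c \<Sigma> \<and>
        u' = pair_comp a b c u \<and> v' = pair_comp a b c v) \<or>
     \<comment> \<open>(6) a-maximal chain compression\<close>
     (\<exists>a ac. a \<in> \<Sigma> \<and> ar a = 1 \<and> inj_on ac {1..} \<and>
        (\<forall>l\<ge>1. fresh_for (ac l) u v \<and> ar (ac l) = 1) \<and> \<Sigma>' = \<Sigma> \<union> ac ` {1..} \<and>
        u' = chain_comp a ac u \<and> v' = chain_comp a ac v)"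

end

theory Submission
  imports Defs
begin

definition gnd :: "'f set \<Rightarrow> ('f \<Rightarrow> nat) \<Rightarrow> ('f, 'v, 'c) tm \<Rightarrow> bool" where
  "gnd \<Sigma> ar t \<longleftrightarrow> wf ar t \<and> funs t \<subseteq> \<Sigma> \<and> no_vars t"

lemma ground_term_gnd: "ground_term \<Sigma> ar t \<longleftrightarrow> gnd \<Sigma> ar t \<and> holes t = 0"
  by (auto simp: ground_term_def is_term_def gnd_def)

lemma ground_ctxt_gnd: "ground_ctxt \<Sigma> ar t \<longleftrightarrow> gnd \<Sigma> ar t \<and> holes t = 1"
  by (auto simp: ground_ctxt_def is_ctxt_term_def gnd_def)

lemma fill_assoc: "fill (fill A B) C = fill A (fill B C)"
  by (induction A) auto

lemma fill_noholes: "holes t = 0 \<Longrightarrow> fill t s = t"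
proof (induction t)
  case (Fun f ts)
  then have "map (\<lambda>t. fill t s) ts = ts" by (intro map_idI) auto
  then show ?case by simp
qed auto

lemma sapp_fill: "\<forall>x. holes (sx x) = 0 \<Longrightarrow> sapp sx sX (fill t s) = fill (sapp sx sX t) (sapp sx sX s)"
  by (induction t) (auto simp: fill_assoc fill_noholes)

lemma holes_fill: "holes (fill t s) = holes t * holes s"
proof (induction t)
  case (Fun f ts)
  have "sum_list (map (\<lambda>t. holes (fill t s)) ts) = sum_list (map (\<lambda>t. holes t * holes s) ts)"
    using Fun by (metis (no_types, lifting) map_eq_conv)
  also have "\<dots> = sum_list (map holes ts) * holes s"
    by (induction ts) (auto simp: algebra_simps)
  finally show ?case by (simp add: comp_def)
qed auto

lemma wf_fill: "wf ar t \<Longrightarrow> wf ar s \<Longrightarrow> wf ar (fill t s)"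
  by (induction t) auto

lemma funs_fill: "funs (fill t s) \<subseteq> funs t \<union> funs s"
proof (induction t)
  case (Fun f ts)
  have "\<forall>t\<in>set ts. funs (fill t s) \<subseteq> funs (Fun f ts) \<union> funs s"
    using Fun by fastforce
  then show ?case by (simp add: UN_subset_iff)
qed auto

lemma no_vars_fill: "no_vars t \<Longrightarrow> no_vars s \<Longrightarrow> no_vars (fill t s)"
  by (induction t) auto

lemma gnd_fill: "gnd \<Sigma> ar t \<Longrightarrow> gnd \<Sigma> ar s \<Longrightarrow> gnd \<Sigma> ar (fill t s)"
  unfolding gnd_def using wf_fill[of ar t s] no_vars_fill[of t s] funs_fill[of t s] by auto

lemma sapp_gnd:
  assumes "\<forall>x. ground_term \<Sigma> ar (sx x)" "\<forall>X. ground_ctxt \<Sigma> ar (sX X)"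
  shows "wf ar t \<Longrightarrow> funs t \<subseteq> \<Sigma> \<Longrightarrow> gnd \<Sigma> ar (sapp sx sX t) \<and> holes (sapp sx sX t) = holes t"
proof (induction t)
  case (Fun f ts)
  have wts: "\<forall>t\<in>set ts. wf ar t \<and> funs t \<subseteq> \<Sigma>" using Fun.prems by (simp add: UN_subset_iff)
  have A: "\<forall>t\<in>set ts. gnd \<Sigma> ar (sapp sx sX t) \<and> holes (sapp sx sX t) = holes t"
    using Fun.IH wts by blast
  have "map (\<lambda>t. holes (sapp sx sX t)) ts = map holes ts" using A by simp
  then have B: "sum_list (map (\<lambda>t. holes (sapp sx sX t)) ts) = sum_list (map holes ts)" by metis
  have C: "f \<in> \<Sigma>" "length ts = ar f" using Fun.prems by auto
  show ?case using A B C by (simp add: gnd_def o_def UN_subset_iff)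
next
  case (Var x) then show ?case using assms(1) by (simp add: ground_term_gnd)
next
  case (CVar X t)
  then have "gnd \<Sigma> ar (sapp sx sX t)" "holes (sapp sx sX t) = holes t" by auto
  moreover have "gnd \<Sigma> ar (sX X)" "holes (sX X) = 1" using assms(2) by (auto simp: ground_ctxt_gnd)
  ultimately show ?case by (simp add: holes_fill gnd_fill)
qed (simp add: gnd_def)

lemma sapp_no_vars: "no_vars t \<Longrightarrow> sapp sx sX t = t"
proof (induction t)
  case (Fun f ts)
  then have "map (sapp sx sX) ts = ts" by (intro map_idI) auto
  then show ?case by simp
qed auto

lemma pre_cvar_sapp:
  "\<forall>x. holes (sx x) = 0 \<Longrightarrow> sapp sx (sX(X := fill (sapp sx sX t) (sX X))) w = sapp sx sX (pre_cvar X t w)"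
  by (induction w) (auto simp: sapp_fill fill_assoc)

lemma pre_var_sapp:
  "\<forall>x. holes (sx x) = 0 \<Longrightarrow> sapp (sx(x := fill (sapp sx sX t) (sx x))) sX w = sapp sx sX (pre_var x t w)"
  by (induction w) (auto simp: sapp_fill fill_assoc)

lemma post_cvar_sapp:
  "\<forall>x. holes (sx x) = 0 \<Longrightarrow> sapp sx (sX(X := fill (sX X) (sapp sx sX t))) w = sapp sx sX (post_cvar X t w)"
  by (induction w) (auto simp: sapp_fill fill_assoc)

lemma inst_var_sapp:
  "no_vars t \<Longrightarrow> sapp (sx(x := t)) sX w = sapp sx sX (inst_var x t w)"
  by (induction w) (auto simp: sapp_no_vars)


section \<open>Generic transfer\<close>

lemma hom_transfer:
  assumes sapp_h: "\<And>sx sX t. h (sapp sx sX t) = sapp (h \<circ> sx) (h \<circ> sX) (h t)"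
    and gh: "\<And>t. gnd \<Sigma>' ar t \<Longrightarrow> gnd \<Sigma> ar (h t) \<and> holes (h t) = holes t"
    and "h u' = u" "h v' = v" and "solvable \<Sigma>' ar u' v'"
  shows "solvable \<Sigma> ar u v"
proof -
  obtain sx sX where s: "is_solution \<Sigma>' ar sx sX u' v'" using assms(5) by (auto simp: solvable_def)
  have "is_solution \<Sigma> ar (h \<circ> sx) (h \<circ> sX) u v"
    unfolding is_solution_def
  proof (intro conjI allI)
    fix x show "ground_term \<Sigma> ar ((h \<circ> sx) x)" using s gh by (auto simp: is_solution_def ground_term_gnd)
  next
    fix X show "ground_ctxt \<Sigma> ar ((h \<circ> sX) X)" using s gh by (auto simp: is_solution_def ground_ctxt_gnd)
  next
    show "sapp (h \<circ> sx) (h \<circ> sX) u = sapp (h \<circ> sx) (h \<circ> sX) v"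
      using s assms(3,4) sapp_h[symmetric] by (metis is_solution_def)
  qed
  then show ?thesis by (auto simp: solvable_def)
qed

section \<open>Unary decompression\<close>

fun wr :: "'f list \<Rightarrow> ('f, 'v, 'c) tm \<Rightarrow> ('f, 'v, 'c) tm" where
  "wr [] t = t"
| "wr (b # bs) t = Fun b [wr bs t]"

fun uh :: "('f \<Rightarrow> 'f list option) \<Rightarrow> ('f, 'v, 'c) tm \<Rightarrow> ('f, 'v, 'c) tm" where
  "uh R (Fun g [t]) = (case R g of None \<Rightarrow> Fun g [uh R t] | Some bs \<Rightarrow> wr bs (uh R t))"
| "uh R (Fun g ts) = Fun g (map (uh R) ts)"
| "uh R (Var x) = Var x"
| "uh R (CVar X t) = CVar X (uh R t)"
| "uh R Hole = Hole"

lemma wr_fill: "fill (wr bs t) s = wr bs (fill t s)"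
  by (induction bs) auto

lemma wr_sapp: "sapp sx sX (wr bs t) = wr bs (sapp sx sX t)"
  by (induction bs) auto

lemma wr_append: "wr (xs @ ys) t = wr xs (wr ys t)"
  by (induction xs) auto

lemma uh_fill: "uh R (fill C s) = fill (uh R C) (uh R s)"
  by (induction R C rule: uh.induct) (auto simp: wr_fill split: option.split)

lemma uh_sapp: "uh R (sapp sx sX t) = sapp (uh R \<circ> sx) (uh R \<circ> sX) (uh R t)"
  by (induction R t rule: uh.induct) (auto simp: wr_sapp uh_fill split: option.split)

lemma wr_props:
  assumes "\<forall>b\<in>set bs. ar b = 1 \<and> b \<in> \<Sigma>"
  shows "gnd \<Sigma> ar t \<Longrightarrow> gnd \<Sigma> ar (wr bs t) \<and> holes (wr bs t) = holes t"
  using assms by (induction bs) (auto simp: gnd_def)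

lemma uh_nonunary: assumes "length ts \<noteq> 1" shows "uh R (Fun g ts) = Fun g (map (uh R) ts)"
proof (cases ts)
  case (Cons x xs)
  with assms show ?thesis by (cases xs) auto
qed auto

lemma uh_gnd:
  assumes N: "\<forall>g\<in>\<Sigma>'. R g = None \<longrightarrow> g \<in> \<Sigma>"
    and S: "\<forall>g bs. R g = Some bs \<longrightarrow> ar g = 1 \<and> (\<forall>b\<in>set bs. ar b = 1 \<and> b \<in> \<Sigma>)"
  shows "gnd \<Sigma>' ar t \<Longrightarrow> gnd \<Sigma> ar (uh R t) \<and> holes (uh R t) = holes t"
proof (induction t)
  case (Fun g ts)
  then have g: "g \<in> \<Sigma>'" "length ts = ar g" and IH: "\<forall>t\<in>set ts. gnd \<Sigma> ar (uh R t) \<and> holes (uh R t) = holes t"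
    by (auto simp: gnd_def)
  show ?case
  proof (cases "length ts = 1")
    case True
    then obtain t where ts: "ts = [t]" by (cases ts) auto
    show ?thesis
    proof (cases "R g")
      case None
      then show ?thesis using ts IH N g by (auto simp: gnd_def)
    next
      case (Some bs)
      then show ?thesis using ts IH S wr_props[of bs ar \<Sigma> "uh R t"] by auto
    qed
  next
    case False
    then have "R g = None" using S g by (cases "R g") auto
    then have "g \<in> \<Sigma>" using N g by auto
    moreover have "map (\<lambda>t. holes (uh R t)) ts = map holes ts" using IH by auto
    then have "sum_list (map (\<lambda>t. holes (uh R t)) ts) = sum_list (map holes ts)" by metis
    ultimately show ?thesis using False IH g by (auto simp: uh_nonunary gnd_def o_def)
  qed
qed (auto simp: gnd_def)

lemma uh_None: "R g = None \<Longrightarrow> uh R (Fun g ts) = Fun g (map (uh R) ts)"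
  by (cases "length ts = 1") (auto simp: uh_nonunary length_Suc_conv)

lemma pc_other: "\<not> (g = a \<and> (\<exists>s. ts = [Fun b [s]])) \<Longrightarrow> pair_comp a b c (Fun g ts) = Fun g (map (pair_comp a b c) ts)"
  by (cases "(a,b,c,Fun g ts)" rule: pair_comp.cases) auto

lemma pair_inv:
  "c \<notin> funs u \<Longrightarrow> uh (\<lambda>g. if g = c then Some [a, b] else None) (pair_comp a b c u) = u"
proof (induction u rule: measure_induct_rule[where f=size])
  case (less u)
  let ?R = "\<lambda>g. if g = c then Some [a, b] else None"
  show ?case
  proof (cases u)
    case (Fun g ts)
    show ?thesis
    proof (cases "g = a \<and> (\<exists>s. ts = [Fun b [s]])")
      case True
      then obtain s where ts: "ts = [Fun b [s]]" and g: "g = a" by auto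
      have "uh ?R (pair_comp a b c s) = s" using less Fun ts by auto
      then show ?thesis using Fun ts g by simp
    next
      case False
      have gc: "?R g = None" using less Fun by auto
      have sz: "size x < size u" if "x \<in> set ts" for x
        using Fun that by (simp add: le_imp_less_Suc size_list_estimation')
      have "map (uh ?R) (map (pair_comp a b c) ts) = ts"
        using less Fun sz by (auto intro!: map_idI)
      then show ?thesis using Fun pc_other[OF False] uh_None[of ?R g "map (pair_comp a b c) ts", OF gc] by simp
    qed
  qed (use less in auto)
qed

lemma wrap_inv:
  assumes "inj_on ac {1..}"
  shows "uh (\<lambda>g. if g \<in> ac ` {1..} then Some (replicate (the_inv_into {1..} ac g) a) else None)
           (wrap_chain ac k s)
         = wr (replicate k a) (uh (\<lambda>g. if g \<in> ac ` {1..} then Some (replicate (the_inv_into {1..} ac g) a) else None) s)"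
  using assms by (auto simp: wrap_chain_def the_inv_into_f_f)

lemma wr_rep_Suc: "wr (replicate k a) (Fun a [t]) = Fun a [wr (replicate k a) t]"
  by (induction k) auto

lemma chain_inv:
  "inj_on ac {1..} \<Longrightarrow> \<forall>l\<ge>1. ac l \<notin> funs u \<Longrightarrow>
     uh (\<lambda>g. if g \<in> ac ` {1..} then Some (replicate (the_inv_into {1..} ac g) a) else None)
           (chain_comp_aux a ac k u) = wr (replicate k a) u"
proof (induction a ac k u rule: chain_comp_aux.induct)
  case (1 a ac k g t)
  show ?case
  proof (cases "g = a")
    case True
    then show ?thesis using 1 by (simp add: wr_rep_Suc)
  next
    case False
    let ?R = "\<lambda>g. if g \<in> ac ` {1..} then Some (replicate (the_inv_into {1..} ac g) a) else None"
    have g: "g \<notin> ac ` {1..}" using 1(3,4) by auto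
    have "uh ?R (chain_comp_aux a ac 0 t) = t" using 1 False by simp
    then have "uh ?R (Fun g [chain_comp_aux a ac 0 t]) = Fun g [t]" using g by simp
    then show ?thesis using False wrap_inv[OF 1(3), of a k "Fun g [chain_comp_aux a ac 0 t]"] by simp
  qed
next
  case ("2_1" a ac k g)
  let ?R = "\<lambda>g. if g \<in> ac ` {1..} then Some (replicate (the_inv_into {1..} ac g) a) else None"
  have g: "?R g = None" using "2_1" by auto
  show ?case using wrap_inv[OF "2_1.prems"(1), of a k "Fun g []"] uh_None[of ?R g "[]", OF g] by simp
next
  case ("2_2" a ac k g v vb vc)
  let ?R = "\<lambda>g. if g \<in> ac ` {1..} then Some (replicate (the_inv_into {1..} ac g) a) else None"
  let ?ts = "v # vb # vc"
  have g: "?R g = None" using "2_2" by auto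
  have "map (uh ?R) (map (chain_comp_aux a ac 0) ?ts) = ?ts"
    using "2_2" by (auto intro!: map_idI)
  then show ?case using wrap_inv[OF "2_2.prems"(1), of a k "Fun g (map (chain_comp_aux a ac 0) ?ts)"] uh_None[of ?R g "map (chain_comp_aux a ac 0) ?ts", OF g]
    by simp
next
  case (3 a ac k y)
  show ?case using wrap_inv[OF 3(1), of a k "Var y"] by simp
next
  case (4 a ac k Y s)
  show ?case using 4 wrap_inv[OF 4(2), of a k "CVar Y (chain_comp_aux a ac 0 s)"] by simp
next
  case (5 a ac k)
  show ?case using wrap_inv[OF 5(1), of a k "Hole"] by simp
qed

section \<open>Leaf decompression\<close>

fun lh :: "'f \<Rightarrow> nat \<Rightarrow> 'f \<Rightarrow> 'f \<Rightarrow> ('f, 'v, 'c) tm \<Rightarrow> ('f, 'v, 'c) tm" where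
  "lh f i a f' (Fun g ts) =
     (if g = f' then Fun f (take (i - 1) (map (lh f i a f') ts) @ Fun a [] # drop (i - 1) (map (lh f i a f') ts))
      else Fun g (map (lh f i a f') ts))"
| "lh f i a f' (Var x) = Var x"
| "lh f i a f' (CVar X t) = CVar X (lh f i a f' t)"
| "lh f i a f' Hole = Hole"

lemma lh_fill: "lh f i a f' (fill C s) = fill (lh f i a f' C) (lh f i a f' s)"
proof (induction C)
  case (Fun g ts)
  then show ?case by (auto simp: take_map drop_map dest: in_set_takeD in_set_dropD)
qed auto

lemma lh_sapp: "lh f i a f' (sapp sx sX t) = sapp (lh f i a f' \<circ> sx) (lh f i a f' \<circ> sX) (lh f i a f' t)"
proof (induction t)
  case (Fun g ts)
  then show ?case by (auto simp: take_map drop_map o_def dest: in_set_takeD in_set_dropD)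
qed (auto simp: lh_fill)

lemma lh_inv: "f' \<notin> funs u \<Longrightarrow> lh f i a f' (leaf_comp f i a f' u) = u"
proof (induction u)
  case (Fun g ts)
  define ts' where "ts' = map (leaf_comp f i a f') ts"
  have M: "map (lh f i a f') ts' = ts" using Fun unfolding ts'_def by (auto intro!: map_idI)
  have len: "length ts' = length ts" unfolding ts'_def by simp
  show ?case
  proof (cases "g = f \<and> 1 \<le> i \<and> i \<le> length ts \<and> ts ! (i - 1) = Fun a []")
    case True
    have e: "map (lh f i a f') (take (i - 1) ts' @ drop i ts') = take (i - 1) ts @ drop i ts"
      using M by (metis map_append take_map drop_map)
    have t1: "take (i - 1) (take (i - 1) ts @ drop i ts) = take (i - 1) ts" using True by (simp add: min_def)
    have lt: "length (take (i - 1) ts) = i - 1" using True by auto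
    have t2: "drop (i - 1) (take (i - 1) ts @ drop i ts) = drop i ts" by (simp only: drop_append lt) simp
    have "ts = take (i - 1) ts @ ts ! (i - 1) # drop (Suc (i - 1)) ts"
      using True by (intro id_take_nth_drop) auto
    then have "ts = take (i - 1) ts @ Fun a [] # drop i ts" using True by simp
    note ts = this
    have "leaf_comp f i a f' (Fun g ts) = Fun f' (take (i - 1) ts' @ drop i ts')"
      using True by (simp add: ts'_def Let_def)
    then have "lh f i a f' (leaf_comp f i a f' (Fun g ts))
       = Fun f (take (i - 1) (take (i - 1) ts @ drop i ts) @ Fun a [] # drop (i - 1) (take (i - 1) ts @ drop i ts))"
      using e by (simp del: leaf_comp.simps)
    also have "\<dots> = Fun g ts" using t1 t2 ts True by (simp only:)
    finally show ?thesis .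
  next
    case False
    then show ?thesis using M Fun.prems by (auto simp: ts'_def[symmetric] Let_def)
  qed
qed auto

lemma gnd_Fun: "gnd \<Sigma> ar (Fun g ts) \<longleftrightarrow> g \<in> \<Sigma> \<and> length ts = ar g \<and> (\<forall>t\<in>set ts. gnd \<Sigma> ar t)"
  unfolding gnd_def by (auto simp: UN_subset_iff)

lemma holes_take_drop: "sum_list (map holes (take n M @ x # drop n M)) = sum_list (map holes M) + holes x"
proof -
  have "sum_list (map holes (take n M @ x # drop n M)) = sum_list (map holes (take n M)) + holes x + sum_list (map holes (drop n M))"
    by simp
  also have "\<dots> = sum_list (map holes (take n M @ drop n M)) + holes x" by (simp only: map_append sum_list_append)
  finally show ?thesis by simp
qed

lemma lh_gnd:
  assumes "f \<in> \<Sigma>" "a \<in> \<Sigma>" "ar a = 0" "1 \<le> i" "i \<le> ar f" "ar f' = ar f - 1"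
  shows "gnd (insert f' \<Sigma>) ar t \<Longrightarrow> gnd \<Sigma> ar (lh f i a f' t) \<and> holes (lh f i a f' t) = holes t"
proof (induction t)
  case (Fun g ts)
  have g: "g \<in> insert f' \<Sigma>" "length ts = ar g" and gts: "\<forall>t\<in>set ts. gnd (insert f' \<Sigma>) ar t"
    using Fun.prems by (simp_all add: gnd_Fun)
  have IH: "\<forall>t\<in>set ts. gnd \<Sigma> ar (lh f i a f' t) \<and> holes (lh f i a f' t) = holes t"
    using Fun.IH gts by blast
  define M where "M = map (lh f i a f') ts"
  have MG: "\<forall>t\<in>set M. gnd \<Sigma> ar t" using IH unfolding M_def by simp
  have "map holes M = map holes ts" using IH unfolding M_def by simp
  then have MH: "sum_list (map holes M) = sum_list (map holes ts)" by simp
  show ?case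
  proof (cases "g = f'")
    case True
    let ?L = "take (i - 1) M @ Fun a [] # drop (i - 1) M"
    have lenM: "length M = ar f - 1" using g True assms unfolding M_def by simp
    have "length ?L = ar f" using lenM assms by simp
    moreover have "gnd \<Sigma> ar (Fun a [])" using assms by (simp add: gnd_Fun)
    then have "\<forall>t\<in>set ?L. gnd \<Sigma> ar t" using MG
      by (auto dest: in_set_takeD in_set_dropD)
    moreover have "sum_list (map holes ?L) = sum_list (map holes M)"
      by (simp only: holes_take_drop) simp
    ultimately have "gnd \<Sigma> ar (Fun f ?L) \<and> holes (Fun f ?L) = holes (Fun g ts)"
      using MH assms by (simp add: gnd_Fun)
    then show ?thesis using True unfolding M_def by simp
  next
    case False
    then have "g \<in> \<Sigma>" using g by simp
    then have "gnd \<Sigma> ar (Fun g M) \<and> holes (Fun g M) = holes (Fun g ts)"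
      using MG MH g unfolding M_def by (simp add: gnd_Fun)
    then show ?thesis using False unfolding M_def by simp
  qed
qed (simp_all add: gnd_def)

lemma sapp_ctxt_gnd:
  assumes "is_solution \<Sigma> ar sx sX u' v'" "is_ctxt_term \<Sigma> ar t"
  shows "gnd \<Sigma> ar (sapp sx sX t) \<and> holes (sapp sx sX t) = 1"
  using assms sapp_gnd[of \<Sigma> ar sx sX t] by (auto simp: is_solution_def is_ctxt_term_def)

lemma sx_holes: "is_solution \<Sigma> ar sx sX u' v' \<Longrightarrow> \<forall>x. holes (sx x) = 0"
  by (auto simp: is_solution_def ground_term_gnd)

lemma case_pre_cvar:
  assumes "is_ctxt_term \<Sigma> ar t" "solvable \<Sigma> ar (pre_cvar X t u) (pre_cvar X t v)"
  shows "solvable \<Sigma> ar u v"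
proof -
  obtain sx sX where s: "is_solution \<Sigma> ar sx sX (pre_cvar X t u) (pre_cvar X t v)"
    using assms(2) by (auto simp: solvable_def)
  have G: "gnd \<Sigma> ar (sapp sx sX t) \<and> holes (sapp sx sX t) = 1" using sapp_ctxt_gnd[OF s assms(1)] .
  have h0: "\<forall>x. holes (sx x) = 0" using sx_holes[OF s] .
  have "is_solution \<Sigma> ar sx (sX(X := fill (sapp sx sX t) (sX X))) u v"
    using s G gnd_fill[of \<Sigma> ar "sapp sx sX t" "sX X"]
    by (auto simp: is_solution_def pre_cvar_sapp[OF h0] ground_ctxt_gnd holes_fill)
  then show ?thesis by (auto simp: solvable_def)
qed

lemma case_pre_var:
  assumes "is_ctxt_term \<Sigma> ar t" "solvable \<Sigma> ar (pre_var x t u) (pre_var x t v)"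
  shows "solvable \<Sigma> ar u v"
proof -
  obtain sx sX where s: "is_solution \<Sigma> ar sx sX (pre_var x t u) (pre_var x t v)"
    using assms(2) by (auto simp: solvable_def)
  have G: "gnd \<Sigma> ar (sapp sx sX t) \<and> holes (sapp sx sX t) = 1" using sapp_ctxt_gnd[OF s assms(1)] .
  have h0: "\<forall>x. holes (sx x) = 0" using sx_holes[OF s] .
  have "is_solution \<Sigma> ar (sx(x := fill (sapp sx sX t) (sx x))) sX u v"
    using s G gnd_fill[of \<Sigma> ar "sapp sx sX t" "sx x"]
    by (auto simp: is_solution_def pre_var_sapp[OF h0] ground_term_gnd holes_fill)
  then show ?thesis by (auto simp: solvable_def)
qed

lemma case_post_cvar:
  assumes "is_ctxt_term \<Sigma> ar t" "solvable \<Sigma> ar (post_cvar X t u) (post_cvar X t v)"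
  shows "solvable \<Sigma> ar u v"
proof -
  obtain sx sX where s: "is_solution \<Sigma> ar sx sX (post_cvar X t u) (post_cvar X t v)"
    using assms(2) by (auto simp: solvable_def)
  have G: "gnd \<Sigma> ar (sapp sx sX t) \<and> holes (sapp sx sX t) = 1" using sapp_ctxt_gnd[OF s assms(1)] .
  have h0: "\<forall>x. holes (sx x) = 0" using sx_holes[OF s] .
  have "is_solution \<Sigma> ar sx (sX(X := fill (sX X) (sapp sx sX t))) u v"
    using s G gnd_fill[of \<Sigma> ar "sX X" "sapp sx sX t"]
    by (auto simp: is_solution_def post_cvar_sapp[OF h0] ground_ctxt_gnd holes_fill)
  then show ?thesis by (auto simp: solvable_def)
qed

lemma case_inst_var:
  assumes "ground_term \<Sigma> ar t" "solvable \<Sigma> ar (inst_var x t u) (inst_var x t v)"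
  shows "solvable \<Sigma> ar u v"
proof -
  obtain sx sX where s: "is_solution \<Sigma> ar sx sX (inst_var x t u) (inst_var x t v)"
    using assms(2) by (auto simp: solvable_def)
  have nv: "no_vars t" using assms(1) by (simp add: ground_term_def)
  have "is_solution \<Sigma> ar (sx(x := t)) sX u v"
    using s assms(1) by (auto simp: is_solution_def inst_var_sapp[OF nv])
  then show ?thesis by (auto simp: solvable_def)
qed

theorem lemma4p2:
  fixes \<Sigma> :: "'f set" and ar :: "'f \<Rightarrow> nat"
    and u v u' v' :: "('f, 'v, 'c) tm" and \<Sigma>' :: "'f set"
  assumes "is_term \<Sigma> ar u" and "is_term \<Sigma> ar v"
    and "one_step \<Sigma> ar u v \<Sigma>' u' v'"
    and "solvable \<Sigma>' ar u' v'"
  shows "solvable \<Sigma> ar u v"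
  using assms(3) unfolding one_step_def
proof (elim disjE exE conjE)
  fix X t assume "is_ctxt_term \<Sigma> ar t" "\<Sigma>' = \<Sigma>" "u' = pre_cvar X t u" "v' = pre_cvar X t v"
  then show ?thesis using assms(4) case_pre_cvar[of \<Sigma> ar t X u v] by simp
next
  fix x t assume "is_ctxt_term \<Sigma> ar t" "\<Sigma>' = \<Sigma>" "u' = pre_var x t u" "v' = pre_var x t v"
  then show ?thesis using assms(4) case_pre_var[of \<Sigma> ar t x u v] by simp
next
  fix X t assume "is_ctxt_term \<Sigma> ar t" "\<Sigma>' = \<Sigma>" "u' = post_cvar X t u" "v' = post_cvar X t v"
  then show ?thesis using assms(4) case_post_cvar[of \<Sigma> ar t X u v] by simp
next
  fix x t assume "ground_term \<Sigma> ar t" "\<Sigma>' = \<Sigma>" "u' = inst_var x t u" "v' = inst_var x t v"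
  then show ?thesis using assms(4) case_inst_var[of \<Sigma> ar t x u v] by simp
next
  fix f i a f'
  assume A: "f \<in> \<Sigma>" "a \<in> \<Sigma>" "ar a = 0" "1 \<le> i" "i \<le> ar f" "fresh_for f' u v"
    "ar f' = ar f - 1" "\<Sigma>' = insert f' \<Sigma>" "u' = leaf_comp f i a f' u" "v' = leaf_comp f i a f' v"
  show ?thesis
  proof (rule hom_transfer[where h = "lh f i a f'" and \<Sigma>' = \<Sigma>' and u' = u' and v' = v'])
    show "\<And>sx sX t. lh f i a f' (sapp sx sX t) = sapp (lh f i a f' \<circ> sx) (lh f i a f' \<circ> sX) (lh f i a f' t)"
      by (rule lh_sapp)
    show "\<And>t. gnd \<Sigma>' ar t \<Longrightarrow> gnd \<Sigma> ar (lh f i a f' t) \<and> holes (lh f i a f' t) = holes t"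
      using lh_gnd[OF A(1-5,7)] A(8) by blast
    show "lh f i a f' u' = u" "lh f i a f' v' = v" using A(6,9,10) lh_inv by (auto simp: fresh_for_def)
  qed (rule assms(4))
next
  fix a b c
  assume A: "a \<in> \<Sigma>" "b \<in> \<Sigma>" "ar a = 1" "ar b = 1" "fresh_for c u v" "ar c = 1"
    "\<Sigma>' = insert c \<Sigma>" "u' = pair_comp a b c u" "v' = pair_comp a b c v"
  let ?R = "\<lambda>g. if g = c then Some [a, b] else None"
  show ?thesis
  proof (rule hom_transfer[where h = "uh ?R" and \<Sigma>' = \<Sigma>' and u' = u' and v' = v'])
    show "\<And>sx sX t. uh ?R (sapp sx sX t) = sapp (uh ?R \<circ> sx) (uh ?R \<circ> sX) (uh ?R t)"
      by (rule uh_sapp)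
    have N: "\<forall>g\<in>\<Sigma>'. ?R g = None \<longrightarrow> g \<in> \<Sigma>" using A by auto
    have S: "\<forall>g bs. ?R g = Some bs \<longrightarrow> ar g = 1 \<and> (\<forall>b\<in>set bs. ar b = 1 \<and> b \<in> \<Sigma>)" using A by auto
    show "\<And>t. gnd \<Sigma>' ar t \<Longrightarrow> gnd \<Sigma> ar (uh ?R t) \<and> holes (uh ?R t) = holes t"
      using uh_gnd[OF N S] by blast
    show "uh ?R u' = u" "uh ?R v' = v" using A(5,8,9) pair_inv by (auto simp: fresh_for_def)
  qed (rule assms(4))
next
  fix a ac
  assume A: "a \<in> \<Sigma>" "ar a = 1" "inj_on ac {1..}" "\<forall>l\<ge>1. fresh_for (ac l) u v \<and> ar (ac l) = 1"
    "\<Sigma>' = \<Sigma> \<union> ac ` {1..}" "u' = chain_comp a ac u" "v' = chain_comp a ac v"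
  let ?R = "\<lambda>g. if g \<in> ac ` {1..} then Some (replicate (the_inv_into {1..} ac g) a) else None"
  show ?thesis
  proof (rule hom_transfer[where h = "uh ?R" and \<Sigma>' = \<Sigma>' and u' = u' and v' = v'])
    show "\<And>sx sX t. uh ?R (sapp sx sX t) = sapp (uh ?R \<circ> sx) (uh ?R \<circ> sX) (uh ?R t)"
      by (rule uh_sapp)
    have N: "\<forall>g\<in>\<Sigma>'. ?R g = None \<longrightarrow> g \<in> \<Sigma>" using A by auto
    have S: "\<forall>g bs. ?R g = Some bs \<longrightarrow> ar g = 1 \<and> (\<forall>b\<in>set bs. ar b = 1 \<and> b \<in> \<Sigma>)" using A by auto
    show "\<And>t. gnd \<Sigma>' ar t \<Longrightarrow> gnd \<Sigma> ar (uh ?R t) \<and> holes (uh ?R t) = holes t"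
      using uh_gnd[OF N S] by blast
    have fu: "\<forall>l\<ge>1. ac l \<notin> funs u" and fv: "\<forall>l\<ge>1. ac l \<notin> funs v" using A(4) by (auto simp: fresh_for_def)
    show "uh ?R u' = u" using chain_inv[OF A(3) fu, of a 0] A(6) by (simp add: chain_comp_def)
    show "uh ?R v' = v" using chain_inv[OF A(3) fv, of a 0] A(7) by (simp add: chain_comp_def)
  qed (rule assms(4))
qed

end
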